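(* Let $\mathcal{A}$ be a finite alphabet and $\mathcal{F}$ a finite set of finite patterns on $\mathbb{Z}^d$. Player $B$ has a winning strategy in $\Gamma(\mathcal{A},\mathcal{F},\mathbb{Z}^d)$ if and only if, for every integer $n\ge 1$, player $B$ has a winning strategy in $\Gamma(\mathcal{A},\mathcal{F},\llbracket -n,n\rrbracket^d)$.
   Context: Fix $d\ge 1$ and a finite alphabet $\mathcal{A}$. A pattern is a pair $p=(S,f)$ with $S\subseteq\mathbb{Z}^d$ and $f\in\mathcal{A}^S$. A finite pattern $q=(S',g)$ appears in a pattern $p=(S,f)$ if there is $v\in\mathbb{Z}^d$ with $v+S'\subseteq S$ and $f(v+j)=g(j)$ for all $j\in S'$. For a finite set $\mathcal{F}$ of finite patterns and $E\subseteq\mathbb{Z}^d$, the Domino game $\Gamma(\mathcal{A},\mathcal{F},E)$ is played by two players $A$ and $B$ who alternate turns, $A$ moving first, starting from the empty pattern. On each turn the current player either passes, or chooses a cell $i\in E$ not yet coloured and a colour $a\in\mathcal{A}$ and colours $i$ with $a$. As soon as some pattern of $\mathcal{F}$ appears in the current pattern, the game ends and $A$ wins; the game also ends if all of $E$ is coloured. $B$ wins if no pattern of $\mathcal{F}$ ever appears. A strategy is winning for a player if that player wins every game in which they follow it. $\llbracket -n,n\rrbracket=\{-n,\dots,n\}$. *)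

theory Defs
  imports Main
begin

text \<open>Cells of Z^d are functions 'd => int for a finite index type 'd (so d = CARD('d) >= 1).
  The finite alphabet is a finite type 'a. A pattern is a partial map cell => colour option;
  its support S is its domain.\<close>

type_synonym ('d, 'a) pattern = "('d \<Rightarrow> int) \<Rightarrow> 'a option"

definition appears :: "('d, 'a) pattern \<Rightarrow> ('d, 'a) pattern \<Rightarrow> bool" where
  "appears q p \<longleftrightarrow> (\<exists>v::'d \<Rightarrow> int. \<forall>j \<in> dom q. p (\<lambda>k. v k + j k) = q j)"

datatype ('d, 'a) move = Pass | Colour "'d \<Rightarrow> int" 'a

fun apply_move :: "('d, 'a) pattern \<Rightarrow> ('d, 'a) move \<Rightarrow> ('d, 'a) pattern" where
  "apply_move p Pass = p"
| "apply_move p (Colour i a) = p(i \<mapsto> a)"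

fun legal :: "('d \<Rightarrow> int) set \<Rightarrow> ('d, 'a) pattern \<Rightarrow> ('d, 'a) move \<Rightarrow> bool" where
  "legal E p Pass = True"
| "legal E p (Colour i a) = (i \<in> E \<and> p i = None)"

text \<open>Current pattern after the first n moves of a play m (turn 0 is A's, turns alternate).\<close>
fun pos :: "(nat \<Rightarrow> ('d, 'a) move) \<Rightarrow> nat \<Rightarrow> ('d, 'a) pattern" where
  "pos m 0 = Map.empty"
| "pos m (Suc n) = apply_move (pos m n) (m n)"

text \<open>It is winning in the Domino game on E if, in every play where A moves legally and B follows it,
  B's moves are legal and no forbidden pattern ever appears. (Once E is fully coloured only
  passes are legal, so ending the game then is the same as continuing with passes.)\<close>
definition B_winning_strategy ::
  "('d, 'a) pattern set \<Rightarrow> ('d \<Rightarrow> int) set \<Rightarrow> (('d, 'a) move list \<Rightarrow> ('d, 'a) move) \<Rightarrow> bool" where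
  "B_winning_strategy F E \<sigma> \<longleftrightarrow>
     (\<forall>m. (\<forall>n. even n \<longrightarrow> legal E (pos m n) (m n)) \<and>
          (\<forall>n. odd n \<longrightarrow> m n = \<sigma> (map m [0..<n]))
      \<longrightarrow> (\<forall>n. odd n \<longrightarrow> legal E (pos m n) (m n)) \<and>
          (\<forall>n. \<forall>q \<in> F. \<not> appears q (pos m n)))"

definition B_wins :: "('d, 'a) pattern set \<Rightarrow> ('d \<Rightarrow> int) set \<Rightarrow> bool" where
  "B_wins F E \<longleftrightarrow> (\<exists>\<sigma>. B_winning_strategy F E \<sigma>)"

definition box :: "int \<Rightarrow> ('d \<Rightarrow> int) set" where
  "box n = {x. \<forall>k. -n \<le> x k \<and> x k \<le> n}"

end

theory Submission
  imports Defs
begin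

definition binv :: "('d, 'a) pattern set \<Rightarrow> ('d \<Rightarrow> int) set \<Rightarrow> (('d, 'a) pattern \<times> bool) set \<Rightarrow> bool" where
  "binv F E S \<longleftrightarrow> (Map.empty, True) \<in> S \<and> (\<forall>p t. (p,t) \<in> S \<longrightarrow> (\<forall>q\<in>F. \<not> appears q p))
    \<and> (\<forall>p. (p,True) \<in> S \<longrightarrow> (\<forall>mv. legal E p mv \<longrightarrow> (apply_move p mv, False) \<in> S))
    \<and> (\<forall>p. (p,False) \<in> S \<longrightarrow> (\<exists>mv. legal E p mv \<and> (apply_move p mv, True) \<in> S))"

lemma pos_foldl: "pos m n = foldl apply_move Map.empty (map m [0..<n])"
  by (induction n) auto

lemma pos_cong: "(\<And>j. j < i \<Longrightarrow> m j = f j) \<Longrightarrow> pos m i = pos f i"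
  by (induction i) auto

lemma binv_wins: fixes S :: "(('d, 'a) pattern \<times> bool) set" assumes "binv F E S" shows "B_wins F E"
proof -
  define P where "P h = foldl apply_move Map.empty h" for h :: "('d,'a) move list"
  define \<sigma> where "\<sigma> h = (SOME mv. legal E (P h) mv \<and> (apply_move (P h) mv, True) \<in> S)" for h
  have "B_winning_strategy F E \<sigma>"
    unfolding B_winning_strategy_def
  proof (intro allI impI)
    fix m :: "nat \<Rightarrow> ('d,'a) move"
    assume H: "(\<forall>n. even n \<longrightarrow> legal E (pos m n) (m n)) \<and> (\<forall>n. odd n \<longrightarrow> m n = \<sigma> (map m [0..<n]))"
    have Pm: "P (map m [0..<n]) = pos m n" for n by (simp add: P_def pos_foldl)
    have odd_step: "legal E (pos m n) (m n) \<and> (apply_move (pos m n) (m n), True) \<in> S"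
      if "odd n" "(pos m n, False) \<in> S" for n
    proof -
      have ex: "\<exists>mv. legal E (P (map m [0..<n])) mv \<and> (apply_move (P (map m [0..<n])) mv, True) \<in> S"
        using assms that(2) unfolding binv_def Pm by blast
      have "m n = \<sigma> (map m [0..<n])" using H that(1) by blast
      then show ?thesis using someI_ex[OF ex] unfolding \<sigma>_def Pm by simp
    qed
    have inS: "(pos m n, even n) \<in> S" for n
    proof (induction n)
      case 0 then show ?case using assms by (simp add: binv_def)
    next
      case (Suc n)
      show ?case
      proof (cases "even n")
        case True
        have "legal E (pos m n) (m n)" using H True by blast
        moreover have "(pos m n, True) \<in> S" using Suc True by simp
        ultimately have "(apply_move (pos m n) (m n), False) \<in> S" using assms unfolding binv_def by blast
        then show ?thesis using True by simp
      next
        case False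
        then show ?thesis using Suc odd_step[of n] by auto
      qed
    qed
    show "(\<forall>n. odd n \<longrightarrow> legal E (pos m n) (m n)) \<and> (\<forall>n. \<forall>q\<in>F. \<not> appears q (pos m n))"
    proof (intro conjI allI impI ballI)
      fix n :: nat assume "odd n" then show "legal E (pos m n) (m n)" using odd_step inS[of n] by auto
    next
      fix n :: nat and q assume "q \<in> F" then show "\<not> appears q (pos m n)" using inS[of n] assms unfolding binv_def by blast
    qed
  qed
  then show ?thesis unfolding B_wins_def by blast
qed

fun playf :: "(nat \<Rightarrow> ('d,'a) move) \<Rightarrow> nat \<Rightarrow> (('d, 'a) move list \<Rightarrow> ('d, 'a) move) \<Rightarrow> nat \<Rightarrow> ('d,'a) move list" where
  "playf f k \<sigma> 0 = []"
| "playf f k \<sigma> (Suc i) = playf f k \<sigma> i @ [if i < k then f i else if even i then Pass else \<sigma> (playf f k \<sigma> i)]"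

definition cons :: "(('d, 'a) move list \<Rightarrow> ('d, 'a) move) \<Rightarrow> ('d \<Rightarrow> int) set \<Rightarrow> (nat \<Rightarrow> ('d,'a) move) \<Rightarrow> bool" where
  "cons \<sigma> E m \<longleftrightarrow> (\<forall>n. even n \<longrightarrow> legal E (pos m n) (m n)) \<and> (\<forall>n. odd n \<longrightarrow> m n = \<sigma> (map m [0..<n]))"

lemma extend:
  assumes "\<forall>i<k. odd i \<longrightarrow> f i = \<sigma> (map f [0..<i])" "\<forall>i<k. even i \<longrightarrow> legal E (pos f i) (f i)"
  shows "\<exists>m. cons \<sigma> E m \<and> (\<forall>i<k. m i = f i)"
proof -
  define m where "m i = (if i < k then f i else if even i then Pass else \<sigma> (playf f k \<sigma> i))" for i
  have mp: "map m [0..<i] = playf f k \<sigma> i" for i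
    by (induction i) (auto simp: m_def)
  have agree: "\<forall>i<k. m i = f i" by (simp add: m_def)
  have "cons \<sigma> E m"
    unfolding cons_def
  proof (intro conjI allI impI)
    fix n :: nat assume "even n"
    show "legal E (pos m n) (m n)"
    proof (cases "n < k")
      case True
      have "pos m n = pos f n" by (rule pos_cong) (use True agree in auto)
      then show ?thesis using True assms(2) \<open>even n\<close> agree by auto
    next
      case False then show ?thesis using \<open>even n\<close> by (simp add: m_def)
    qed
  next
    fix n :: nat assume "odd n"
    show "m n = \<sigma> (map m [0..<n])"
    proof (cases "n < k")
      case True
      have e: "map m [0..<n] = map f [0..<n]" using True agree by auto
      have "m n = f n" using True agree by auto
      also have "\<dots> = \<sigma> (map f [0..<n])" using True assms(1) \<open>odd n\<close> by auto
      finally show ?thesis by (simp only: e)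
    next
      case False then show ?thesis using \<open>odd n\<close> by (simp add: m_def mp)
    qed
  qed
  then show ?thesis using agree by blast
qed

lemma wins_binv: assumes "B_wins F E" shows "\<exists>S. binv F E S"
proof -
  obtain \<sigma> where W: "B_winning_strategy F E \<sigma>" using assms unfolding B_wins_def by blast
  have W0: "\<forall>m. cons \<sigma> E m \<longrightarrow> (\<forall>n. odd n \<longrightarrow> legal E (pos m n) (m n)) \<and> (\<forall>n. \<forall>q \<in> F. \<not> appears q (pos m n))"
    using W unfolding B_winning_strategy_def cons_def .
  have W': "cons \<sigma> E m \<Longrightarrow> (\<forall>n. odd n \<longrightarrow> legal E (pos m n) (m n)) \<and> (\<forall>n. \<forall>q \<in> F. \<not> appears q (pos m n))" for m
    using W0 by blast
  define S where "S = {(pos m n, even n) | m n. cons \<sigma> E m}"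
  have "binv F E S"
    unfolding binv_def
  proof (intro conjI allI impI ballI)
    obtain m where "cons \<sigma> E m" using extend[of 0] by auto
    then show "(Map.empty, True) \<in> S" unfolding S_def by (force intro: exI[of _ 0])
  next
    fix p t q assume "(p, t) \<in> S" "q \<in> F"
    then show "\<not> appears q p" using W' unfolding S_def by blast
  next
    fix p mv assume A: "(p, True) \<in> S" "legal E p mv"
    then obtain m n where mn: "cons \<sigma> E m" "p = pos m n" "even n" unfolding S_def by auto
    define f where "f = m(n := mv)"
    have fm: "\<forall>i<n. f i = m i" by (simp add: f_def)
    have c1: "\<forall>i<Suc n. odd i \<longrightarrow> f i = \<sigma> (map f [0..<i])"
    proof (intro allI impI)
      fix i assume "i < Suc n" "odd i"
      then have "i < n" using mn(3) by (metis less_Suc_eq)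
      then have e: "map f [0..<i] = map m [0..<i]" using fm by auto
      have "f i = m i" using fm \<open>i<n\<close> by auto
      also have "\<dots> = \<sigma> (map m [0..<i])" using mn(1) \<open>odd i\<close> unfolding cons_def by auto
      finally show "f i = \<sigma> (map f [0..<i])" by (simp only: e)
    qed
    have c2: "\<forall>i<Suc n. even i \<longrightarrow> legal E (pos f i) (f i)"
    proof (intro allI impI)
      fix i assume "i < Suc n" "even i"
      have pf: "pos f i = pos m i" by (rule pos_cong) (use \<open>i < Suc n\<close> in \<open>simp add: f_def\<close>)
      show "legal E (pos f i) (f i)"
      proof (cases "i = n")
        case True then show ?thesis using pf A mn by (simp add: f_def)
      next
        case False then show ?thesis using pf mn \<open>even i\<close> unfolding cons_def by (simp add: f_def)
      qed
    qed
    obtain m' where m': "cons \<sigma> E m'" "\<forall>i<Suc n. m' i = f i" using extend[OF c1 c2] by blast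
    have "pos m' n = pos m n" by (rule pos_cong) (use m' fm in auto)
    then have "pos m' (Suc n) = apply_move p mv" using m' mn by (simp add: f_def)
    moreover have "\<not> even (Suc n)" using mn(3) by simp
    moreover have "(pos m' (Suc n), even (Suc n)) \<in> S" unfolding S_def using m'(1) by blast
    ultimately show "(apply_move p mv, False) \<in> S" by simp
  next
    fix p assume "(p, False) \<in> S"
    then obtain m n where mn: "cons \<sigma> E m" "p = pos m n" "odd n" unfolding S_def by auto
    have "legal E p (m n)" using W' mn by auto
    moreover have "(apply_move p (m n), True) \<in> S"
    proof -
      have "(pos m (Suc n), even (Suc n)) \<in> S" unfolding S_def using mn(1) by blast
      then show ?thesis using mn by simp
    qed
    ultimately show "\<exists>mv. legal E p mv \<and> (apply_move p mv, True) \<in> S" by blast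
  qed
  then show ?thesis by blast
qed


lemma box_mono: assumes "k \<le> k'" shows "box k \<subseteq> box k'"
proof (rule subsetI)
  fix x assume "x \<in> box k"
  then have "-k \<le> x i \<and> x i \<le> k" for i unfolding box_def by auto
  then have "-k' \<le> x i \<and> x i \<le> k'" for i using assms by (meson minus_le_iff order_trans)
  then show "x \<in> box k'" unfolding box_def by auto
qed

lemma finite_box: "finite (box n :: ('d::finite \<Rightarrow> int) set)"
proof -
  have "finite {f :: 'd \<Rightarrow> int. \<forall>x. (x \<in> UNIV \<longrightarrow> f x \<in> {-n..n}) \<and> (x \<notin> UNIV \<longrightarrow> f x = 0)}"
    by (rule finite_set_of_finite_funs) auto
  moreover have "box n \<subseteq> {f :: 'd \<Rightarrow> int. \<forall>x. (x \<in> UNIV \<longrightarrow> f x \<in> {-n..n}) \<and> (x \<notin> UNIV \<longrightarrow> f x = 0)}"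
    unfolding box_def by auto
  ultimately show ?thesis by (rule finite_subset[rotated])
qed

lemma in_box: "\<exists>k. (c :: 'd::finite \<Rightarrow> int) \<in> box k"
proof -
  have "\<bar>c i\<bar> \<le> (\<Sum>j\<in>UNIV. \<bar>c j\<bar>)" for i
    by (rule member_le_sum) auto
  then have "- (\<Sum>j\<in>UNIV. \<bar>c j\<bar>) \<le> c i \<and> c i \<le> (\<Sum>j\<in>UNIV. \<bar>c j\<bar>)" for i
    by (metis abs_le_D1 abs_le_D2 minus_le_iff)
  then have "c \<in> box (\<Sum>j\<in>UNIV. \<bar>c j\<bar>)" unfolding box_def by auto
  then show ?thesis by blast
qed

lemma finite_in_box: "finite X \<Longrightarrow> \<exists>k. X \<subseteq> (box k :: ('d::finite \<Rightarrow> int) set)"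
proof (induction X rule: finite_induct)
  case empty then show ?case by auto
next
  case (insert x X)
  obtain k where k: "X \<subseteq> box k" using insert by blast
  obtain k' where k': "x \<in> box k'" using in_box by blast
  have "insert x X \<subseteq> box (max k k')" using k k' box_mono[of k "max k k'"] box_mono[of k' "max k k'"] by auto
  then show ?case by blast
qed

lemma appears_restrict: "appears q (p |` A) \<Longrightarrow> appears q p"
  unfolding appears_def
proof (elim exE)
  fix v assume H: "\<forall>j\<in>dom q. (p |` A) (\<lambda>k. v k + j k) = q j"
  have "\<forall>j\<in>dom q. p (\<lambda>k. v k + j k) = q j"
  proof
    fix j assume "j \<in> dom q"
    then have "(p |` A) (\<lambda>k. v k + j k) \<noteq> None" using H by auto
    then show "p (\<lambda>k. v k + j k) = q j" using H \<open>j \<in> dom q\<close>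
      by (metis restrict_map_def)
  qed
  then show "\<exists>v. \<forall>j\<in>dom q. p (\<lambda>k. v k + j k) = q j" by blast
qed

lemma binv_restrict:
  assumes "binv F UNIV S"
  shows "binv F A ((\<lambda>(p,t). (p |` A, t)) ` S)"
  unfolding binv_def
proof (intro conjI allI impI ballI)
  show "(Map.empty, True) \<in> (\<lambda>(p,t). (p |` A, t)) ` S"
    using assms unfolding binv_def by (force intro: image_eqI[of _ _ "(Map.empty, True)"])
next
  fix p t q assume "(p, t) \<in> (\<lambda>(p,t). (p |` A, t)) ` S" "q \<in> F"
  then obtain p0 where "(p0, t) \<in> S" "p = p0 |` A" by auto
  then show "\<not> appears q p" using assms \<open>q \<in> F\<close> appears_restrict unfolding binv_def by blast
next
  fix p mv assume H: "(p, True) \<in> (\<lambda>(p,t). (p |` A, t)) ` S" "legal A p mv"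
  then obtain p0 where p0: "(p0, True) \<in> S" "p = p0 |` A" by auto
  show "(apply_move p mv, False) \<in> (\<lambda>(p,t). (p |` A, t)) ` S"
  proof (cases mv)
    case Pass
    then have "(p0, False) \<in> S" using p0 assms unfolding binv_def by (metis apply_move.simps(1) legal.simps(1))
    then show ?thesis using Pass p0 by force
  next
    case (Colour c a)
    then have "c \<in> A" "p c = None" using H by auto
    then have "p0 c = None" using p0(2) by (simp add: restrict_map_def)
    then have "(p0(c \<mapsto> a), False) \<in> S" using p0 assms unfolding binv_def
      by (metis apply_move.simps(2) legal.simps(2) UNIV_I)
    moreover have "p0(c \<mapsto> a) |` A = p(c \<mapsto> a)" using \<open>c \<in> A\<close> p0 by (auto simp: restrict_map_def)
    ultimately show ?thesis using Colour by force
  qed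
next
  fix p assume H: "(p, False) \<in> (\<lambda>(p,t). (p |` A, t)) ` S"
  then obtain p0 where p0: "(p0, False) \<in> S" "p = p0 |` A" by auto
  then obtain mv where mv: "legal UNIV p0 mv" "(apply_move p0 mv, True) \<in> S" using assms unfolding binv_def by blast
  show "\<exists>mv. legal A p mv \<and> (apply_move p mv, True) \<in> (\<lambda>(p,t). (p |` A, t)) ` S"
  proof (cases mv)
    case Pass
    then show ?thesis using mv p0 by (intro exI[of _ Pass]) force
  next
    case (Colour c a)
    show ?thesis
    proof (cases "c \<in> A")
      case True
      have "p0(c \<mapsto> a) |` A = p(c \<mapsto> a)" using True p0 by (auto simp: restrict_map_def)
      moreover have "legal A p (Colour c a)" using True mv Colour p0 by auto
      ultimately show ?thesis using mv Colour by (intro exI[of _ "Colour c a"]) force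
    next
      case False
      have "p0(c \<mapsto> a) |` A = p" using False p0 by (auto simp: restrict_map_def)
      then show ?thesis using mv Colour by (intro exI[of _ Pass]) force
    qed
  qed
qed


definition fails :: "(int \<Rightarrow> (('d, 'a) pattern \<times> bool) set) \<Rightarrow> ('d, 'a) pattern \<Rightarrow> bool \<Rightarrow> int \<Rightarrow> int \<Rightarrow> bool" where
  "fails SS p t k N \<longleftrightarrow> (\<forall>n\<ge>N. n \<ge> 1 \<longrightarrow> (\<forall>p'. (p',t) \<in> SS n \<longrightarrow> \<not>(\<forall>x\<in>box k. p x = p' x)))"

definition lim :: "(int \<Rightarrow> (('d, 'a) pattern \<times> bool) set) \<Rightarrow> (('d, 'a) pattern \<times> bool) set" where
  "lim SS = {(p,t). \<forall>k N. \<not> fails SS p t k N}"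

lemma fails_mono: "fails SS p t k N \<Longrightarrow> k \<le> k' \<Longrightarrow> N \<le> N' \<Longrightarrow> fails SS p t k' N'"
  unfolding fails_def using box_mono[of k k'] by (meson order_trans subsetD)

lemma uniform:
  fixes P :: "'x \<Rightarrow> int \<Rightarrow> int \<Rightarrow> bool"
  assumes "finite X" "\<forall>x\<in>X. \<exists>k N. P x k N"
    "\<And>x k N k' N'. P x k N \<Longrightarrow> k \<le> k' \<Longrightarrow> N \<le> N' \<Longrightarrow> P x k' N'"
  shows "\<exists>K N. \<forall>x\<in>X. P x K N"
proof -
  have "(\<forall>x\<in>X. \<exists>k N. P x k N) \<longrightarrow> (\<exists>K N. \<forall>x\<in>X. P x K N)" using assms(1)
  proof (induction X rule: finite_induct)
    case empty show ?case by auto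
  next
    case (insert y Y)
    show ?case
    proof
      assume h: "\<forall>x\<in>insert y Y. \<exists>k N. P x k N"
      then obtain K N where KN: "\<forall>x\<in>Y. P x K N" using insert.IH by auto
      obtain k n where kn: "P y k n" using h by auto
      have "\<forall>x\<in>insert y Y. P x (max K k) (max N n)"
        using KN kn assms(3) by (metis insert_iff max.cobounded1 max.cobounded2)
      then show "\<exists>K N. \<forall>x\<in>insert y Y. P x K N" by blast
    qed
  qed
  then show ?thesis using assms(2) by blast
qed

lemma binv_limit:
  fixes SS :: "int \<Rightarrow> (('d::finite, 'a::finite) pattern \<times> bool) set"
  assumes SS: "\<forall>n\<ge>1. binv F (box n) (SS n)" and fin: "\<forall>q\<in>F. finite (dom q)"
  shows "binv F UNIV (lim SS)"
  unfolding binv_def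
proof (intro conjI allI impI ballI)
  have "\<not> fails SS Map.empty True k N" for k N
  proof
    assume f: "fails SS Map.empty True k N"
    have "(Map.empty, True) \<in> SS (max N 1)" using SS unfolding binv_def by auto
    moreover have "max N 1 \<ge> N" "max N 1 \<ge> 1" by auto
    ultimately show False using f unfolding fails_def by fastforce
  qed
  then show "(Map.empty, True) \<in> lim SS" unfolding lim_def by auto
next
  fix p t q assume pt: "(p, t) \<in> lim SS" and q: "q \<in> F"
  show "\<not> appears q p"
  proof
    assume "appears q p"
    then obtain v where v: "\<forall>j\<in>dom q. p (\<lambda>k. v k + j k) = q j" unfolding appears_def by blast
    have "finite ((\<lambda>j k. v k + j k) ` dom q)" using fin q by auto
    then obtain k where k: "(\<lambda>j k. v k + j k) ` dom q \<subseteq> box k" using finite_in_box by blast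
    have "\<not> fails SS p t k 1" using pt unfolding lim_def by auto
    then obtain n p' where np: "n \<ge> 1" "(p', t) \<in> SS n" "\<forall>x\<in>box k. p x = p' x"
      unfolding fails_def by auto
    have "\<forall>j\<in>dom q. p' (\<lambda>k. v k + j k) = q j"
    proof
      fix j assume "j \<in> dom q"
      then have "(\<lambda>k. v k + j k) \<in> box k" using k by auto
      then show "p' (\<lambda>k. v k + j k) = q j" using np(3) v \<open>j \<in> dom q\<close> by metis
    qed
    then have "appears q p'" unfolding appears_def by blast
    then show False using SS np q unfolding binv_def by blast
  qed
next
  fix p mv assume pA: "(p, True) \<in> lim SS" and lg: "legal UNIV p mv"
  show "(apply_move p mv, False) \<in> lim SS"
  proof (cases mv)
    case Pass
    have "\<not> fails SS p False k N" for k N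
    proof
      assume f: "fails SS p False k N"
      have "\<not> fails SS p True k N" using pA unfolding lim_def by auto
      then obtain n p' where np: "n \<ge> N" "n \<ge> 1" "(p', True) \<in> SS n" "\<forall>x\<in>box k. p x = p' x"
        unfolding fails_def by auto
      have "(p', False) \<in> SS n" using SS np unfolding binv_def by (metis apply_move.simps(1) legal.simps(1))
      then show False using f np unfolding fails_def by blast
    qed
    then show ?thesis unfolding lim_def using Pass by auto
  next
    case (Colour c a)
    have pc: "p c = None" using lg Colour by auto
    obtain k0 where k0: "c \<in> box k0" using in_box by blast
    have "\<not> fails SS (p(c \<mapsto> a)) False k N" for k N
    proof
      assume f: "fails SS (p(c \<mapsto> a)) False k N"
      have "\<not> fails SS p True (max k k0) (max N k0)" using pA unfolding lim_def by auto
      then obtain n p' where np: "n \<ge> max N k0" "n \<ge> 1" "(p', True) \<in> SS n" "\<forall>x\<in>box (max k k0). p x = p' x"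
        unfolding fails_def by auto
      have cK: "c \<in> box (max k k0)" using k0 box_mono[of k0 "max k k0"] by auto
      have cn: "c \<in> box n" using k0 box_mono[of k0 n] np(1) by auto
      have p'c: "p' c = None" using np(4) cK pc by metis
      have "(p'(c \<mapsto> a), False) \<in> SS n" using SS np cn p'c unfolding binv_def
        by (metis apply_move.simps(2) legal.simps(2))
      moreover have "\<forall>x\<in>box k. (p(c \<mapsto> a)) x = (p'(c \<mapsto> a)) x"
        using np(4) box_mono[of k "max k k0"] by auto
      moreover have "n \<ge> N" using np(1) by auto
      ultimately show False using f np(2) unfolding fails_def by blast
    qed
    then show ?thesis unfolding lim_def using Colour by auto
  qed
next
  fix p assume pB: "(p, False) \<in> lim SS"
  show "\<exists>mv. legal UNIV p mv \<and> (apply_move p mv, True) \<in> lim SS"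
  proof (rule ccontr)
    assume no: "\<not> ?thesis"
    have "(p, True) \<notin> lim SS" using no by (metis apply_move.simps(1) legal.simps(1))
    then obtain k0 N0 where f0: "fails SS p True k0 N0" unfolding lim_def by auto
    define X where "X = {(c,a::'a). c \<in> box k0 \<and> p c = None}"
    have "finite X"
    proof -
      have "X \<subseteq> box k0 \<times> (UNIV :: 'a set)" unfolding X_def by auto
      moreover have "finite ((box k0 :: ('d \<Rightarrow> int) set) \<times> (UNIV :: 'a set))" using finite_box[of k0] finite_UNIV by (rule finite_cartesian_product)
      ultimately show ?thesis using finite_subset by blast
    qed
    define Q where "Q x k N = fails SS (p(fst x \<mapsto> snd x)) True k N" for x :: "('d \<Rightarrow> int) \<times> 'a" and k N
    have Qm: "Q x k' N'" if "Q x k N" "k \<le> k'" "N \<le> N'" for x k N k' N'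
      using that unfolding Q_def by (rule fails_mono)
    moreover have "\<forall>x\<in>X. \<exists>k N. Q x k N"
    proof
      fix x assume "x \<in> X"
      then obtain c a where x: "x = (c,a)" "p c = None" unfolding X_def by auto
      then have "legal UNIV p (Colour c a)" by simp
      then have "(p(c \<mapsto> a), True) \<notin> lim SS" using no by (metis apply_move.simps(2))
      then show "\<exists>k N. Q x k N"
        unfolding lim_def Q_def using x by auto
    qed
    ultimately obtain K N1 where KN: "\<forall>x\<in>X. Q x K N1"
      using uniform[of X Q] \<open>finite X\<close> by blast
    define K1 where "K1 = max K k0"
    define N2 where "N2 = max (max N1 N0) 1"
    have "\<not> fails SS p False K1 N2" using pB unfolding lim_def by auto
    then obtain n p' where np: "n \<ge> N2" "n \<ge> 1" "(p', False) \<in> SS n" "\<forall>x\<in>box K1. p x = p' x"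
      unfolding fails_def by auto
    have agk0: "\<forall>x\<in>box k0. p x = p' x" using np(4) box_mono[of k0 K1] unfolding K1_def by auto
    have agK: "\<forall>x\<in>box K. p x = p' x" using np(4) box_mono[of K K1] unfolding K1_def by auto
    have nN0: "n \<ge> N0" "n \<ge> N1" using np(1) unfolding N2_def by auto
    obtain mv where mv: "legal (box n) p' mv" "(apply_move p' mv, True) \<in> SS n"
      using SS np unfolding binv_def by blast
    show False
    proof (cases mv)
      case Pass
      then have "(p', True) \<in> SS n" using mv by simp
      then show False using f0 agk0 nN0 np(2) unfolding fails_def by blast
    next
      case (Colour c a)
      then have p'c: "p' c = None" and m2: "(p'(c \<mapsto> a), True) \<in> SS n" using mv by auto
      show False
      proof (cases "c \<in> box k0")
        case True
        then have "p c = None" using agk0 p'c by metis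
        then have "(c,a) \<in> X" using True unfolding X_def by auto
        then have "fails SS (p(c \<mapsto> a)) True K N1" using KN unfolding Q_def by fastforce
        moreover have "\<forall>x\<in>box K. (p(c \<mapsto> a)) x = (p'(c \<mapsto> a)) x" using agK by auto
        ultimately show False using m2 nN0 np(2) unfolding fails_def by blast
      next
        case False
        then have "\<forall>x\<in>box k0. p x = (p'(c \<mapsto> a)) x" using agk0 by auto
        then show False using f0 m2 nN0 np(2) unfolding fails_def by blast
      qed
    qed
  qed
qed

theorem lemma1:
  fixes F :: "('d::finite, 'a::finite) pattern set"
  assumes "finite F" and "\<forall>q \<in> F. finite (dom q)"
  shows "B_wins F (UNIV :: ('d \<Rightarrow> int) set) \<longleftrightarrow> (\<forall>n::int. n \<ge> 1 \<longrightarrow> B_wins F (box n :: ('d \<Rightarrow> int) set))"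
proof
  assume "B_wins F (UNIV :: ('d \<Rightarrow> int) set)"
  then obtain S where S: "binv F (UNIV :: ('d \<Rightarrow> int) set) S" using wins_binv by blast
  show "\<forall>n::int. n \<ge> 1 \<longrightarrow> B_wins F (box n :: ('d \<Rightarrow> int) set)"
    using binv_restrict[OF S] binv_wins by blast
next
  assume H: "\<forall>n::int. n \<ge> 1 \<longrightarrow> B_wins F (box n :: ('d \<Rightarrow> int) set)"
  have "\<forall>n::int. \<exists>S. n \<ge> 1 \<longrightarrow> binv F (box n :: ('d \<Rightarrow> int) set) S"
    using H wins_binv by blast
  then obtain SS where "\<forall>n::int. n \<ge> 1 \<longrightarrow> binv F (box n :: ('d \<Rightarrow> int) set) (SS n)"
    by metis
  then have "binv F UNIV (lim SS)" using binv_limit assms(2) by blast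
  then show "B_wins F (UNIV :: ('d \<Rightarrow> int) set)" using binv_wins by blast
qed

end
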